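(* Let $V, L\ge 1$, $\mathcal{D}=[V]^L$, let $\pi$ be a joint distribution on $\mathcal{D}\times\mathcal{D}$, and let $\kappa:[0,1]\to[0,1]$ be differentiable with $\kappa_0=0$, $\kappa_1=1$, $\kappa_t<1$ for $t<1$. Let $p_t(x)=\sum_{x_0,x_1}\pi(x_0,x_1)\prod_{i=1}^L[(1-\kappa_t)\delta_{x_0^i}(x^i)+\kappa_t\delta_{x_1^i}(x^i)]$ and let $u_t^i(x^i,z)=\sum_{x_0,x_1}\frac{\dot\kappa_t}{1-\kappa_t}[\delta_{x_1^i}(x^i)-\delta_{z^i}(x^i)]\,p_t(x_0,x_1\mid z)$, where $p_t(x_0,x_1\mid z)=p_t(z\mid x_0,x_1)\pi(x_0,x_1)/p_t(z)$ with $p_t(z\mid x_0,x_1)=\prod_{i=1}^L[(1-\kappa_t)\delta_{x_0^i}(z^i)+\kappa_t\delta_{x_1^i}(z^i)]$. Take the similarity $s(a,b)=1-\delta_{b}(a)$ (the discrete metric on $[V]$). Then $c(x_0,x_1)=\sum_{i=1}^L s(x_0^i,x_1^i)=d_H(x_0,x_1)$, so that $$\int_0^1\sum_{x_t}p_t(x_t)\Big[\sum_{i=1}^L\sum_{x^i\ne x_t^i}u_t^i(x^i,x_t)\Big]dt=\sum_{x_0,x_1}d_H(x_0,x_1)\,\pi(x_0,x_1).$$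
   Context: $d_H(x_0,x_1)=\#\{i: x_0^i\neq x_1^i\}$ is the Hamming distance on $[V]^L$. $\delta_a(b)=1$ if $a=b$ and $0$ otherwise. Terms with $p_t(x_t)=0$ contribute zero. *)

theory Defs
  imports "HOL-Analysis.Analysis"
begin

text \<open>Indices are 0-based: the alphabet [V] is {0..<V}, positions are {0..<L}.
  A sequence x in D = [V]^L is a function nat => nat, extensional outside {0..<L}.\<close>

definition seqs :: "nat \<Rightarrow> nat \<Rightarrow> (nat \<Rightarrow> nat) set" where
  "seqs V L = PiE {0..<L} (\<lambda>_. {0..<V})"

definition delta :: "nat \<Rightarrow> nat \<Rightarrow> real" where
  "delta a b = (if a = b then 1 else 0)"

definition hamming :: "nat \<Rightarrow> (nat \<Rightarrow> nat) \<Rightarrow> (nat \<Rightarrow> nat) \<Rightarrow> nat" where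
  "hamming L x0 x1 = card {i \<in> {0..<L}. x0 i \<noteq> x1 i}"

definition simil :: "nat \<Rightarrow> nat \<Rightarrow> real" where
  "simil a b = 1 - delta b a"

definition cond_path :: "nat \<Rightarrow> (real \<Rightarrow> real) \<Rightarrow> real \<Rightarrow> (nat \<Rightarrow> nat) \<Rightarrow> (nat \<Rightarrow> nat) \<Rightarrow> (nat \<Rightarrow> nat) \<Rightarrow> real" where
  "cond_path L \<kappa> t z x0 x1 =
     (\<Prod>i\<in>{0..<L}. (1 - \<kappa> t) * delta (x0 i) (z i) + \<kappa> t * delta (x1 i) (z i))"

definition marg_path :: "nat \<Rightarrow> nat \<Rightarrow> ((nat \<Rightarrow> nat) \<Rightarrow> (nat \<Rightarrow> nat) \<Rightarrow> real) \<Rightarrow> (real \<Rightarrow> real) \<Rightarrow> real \<Rightarrow> (nat \<Rightarrow> nat) \<Rightarrow> real" where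
  "marg_path V L \<pi> \<kappa> t x =
     (\<Sum>x0\<in>seqs V L. \<Sum>x1\<in>seqs V L. \<pi> x0 x1 * cond_path L \<kappa> t x x0 x1)"

text \<open>posterior p_t(x0, x1 | z) (division by zero gives 0 in HOL)\<close>
definition posterior :: "nat \<Rightarrow> nat \<Rightarrow> ((nat \<Rightarrow> nat) \<Rightarrow> (nat \<Rightarrow> nat) \<Rightarrow> real) \<Rightarrow> (real \<Rightarrow> real) \<Rightarrow> real \<Rightarrow> (nat \<Rightarrow> nat) \<Rightarrow> (nat \<Rightarrow> nat) \<Rightarrow> (nat \<Rightarrow> nat) \<Rightarrow> real" where
  "posterior V L \<pi> \<kappa> t x0 x1 z =
     cond_path L \<kappa> t z x0 x1 * \<pi> x0 x1 / marg_path V L \<pi> \<kappa> t z"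

text \<open>velocity u_t^i(a, z); \<kappa>' is the derivative of \<kappa>\<close>
definition velocity :: "nat \<Rightarrow> nat \<Rightarrow> ((nat \<Rightarrow> nat) \<Rightarrow> (nat \<Rightarrow> nat) \<Rightarrow> real) \<Rightarrow> (real \<Rightarrow> real) \<Rightarrow> (real \<Rightarrow> real) \<Rightarrow> real \<Rightarrow> nat \<Rightarrow> nat \<Rightarrow> (nat \<Rightarrow> nat) \<Rightarrow> real" where
  "velocity V L \<pi> \<kappa> \<kappa>' t i a z =
     (\<Sum>x0\<in>seqs V L. \<Sum>x1\<in>seqs V L.
        \<kappa>' t / (1 - \<kappa> t) * (delta (x1 i) a - delta (z i) a) * posterior V L \<pi> \<kappa> t x0 x1 z)"

end

theory Submission imports Defs begin

lemma seqs_lt: "x \<in> seqs V L \<Longrightarrow> j < L \<Longrightarrow> x j < V"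
  by (auto simp: seqs_def PiE_iff)

lemma finite_seqs[simp]: "finite (seqs V L)"
  by (simp add: seqs_def finite_PiE)

lemma sum_delta_lin:
  assumes "a < V" "b < V"
  shows "(\<Sum>v\<in>{0..<V}. (1 - k) * delta a v + k * delta b v) = (1::real)"
  using assms by (simp add: delta_def sum.distrib sum_distrib_left[symmetric])

lemma sum_delta_ne:
  assumes "a < V" "b < V"
  shows "(\<Sum>v\<in>{0..<V}. ((1 - k) * delta a v + k * delta b v) * (if b \<noteq> v then 1 else 0))
     = (1 - k) * (if a \<noteq> b then 1 else (0::real))"
proof -
  have "(\<Sum>v\<in>{0..<V}. ((1 - k) * delta a v + k * delta b v) * (if b \<noteq> v then 1 else 0))
     = (\<Sum>v\<in>{0..<V}. (if v = a then (1 - k) * (if b \<noteq> v then 1 else 0) else 0))"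
    by (rule sum.cong) (auto simp: delta_def)
  also have "\<dots> = (1 - k) * (if a \<noteq> b then 1 else (0::real))" using assms by simp
  finally show ?thesis .
qed

lemma lemB:
  assumes x0: "x0 \<in> seqs V L" and x1: "x1 \<in> seqs V L" and i: "i < L"
  shows "(\<Sum>z\<in>seqs V L. cond_path L \<kappa> t z x0 x1 * (if x1 i \<noteq> z i then 1 else 0))
     = (1 - \<kappa> t) * (if x0 i \<noteq> x1 i then 1 else 0)"
proof -
  define f where "f j v = (1 - \<kappa> t) * delta (x0 j) v + \<kappa> t * delta (x1 j) v" for j v
  define g where "g j v = f j v * (if j = i then (if x1 i \<noteq> v then 1 else 0) else (1::real))" for j v
  have "\<And>z. cond_path L \<kappa> t z x0 x1 * (if x1 i \<noteq> z i then 1 else 0) = (\<Prod>j\<in>{0..<L}. g j (z j))"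
  proof -
    fix z :: "nat \<Rightarrow> nat"
    have "(\<Prod>j\<in>{0..<L}. g j (z j)) = (\<Prod>j\<in>{0..<L}. f j (z j)) *
       (\<Prod>j\<in>{0..<L}. (if j = i then (if x1 i \<noteq> z i then 1 else 0) else (1::real)))"
      unfolding g_def prod.distrib by (intro arg_cong2[where f="(*)"] prod.cong) auto
    also have "(\<Prod>j\<in>{0..<L}. (if j = i then (if x1 i \<noteq> z i then 1 else 0) else (1::real)))
        = (if x1 i \<noteq> z i then 1 else 0)" using i by (simp add: prod.delta)
    finally show "cond_path L \<kappa> t z x0 x1 * (if x1 i \<noteq> z i then 1 else 0) = (\<Prod>j\<in>{0..<L}. g j (z j))"
      by (simp add: cond_path_def f_def)
  qed
  hence "(\<Sum>z\<in>seqs V L. cond_path L \<kappa> t z x0 x1 * (if x1 i \<noteq> z i then 1 else 0))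
      = (\<Sum>z\<in>seqs V L. \<Prod>j\<in>{0..<L}. g j (z j))" by simp
  also have "\<dots> = (\<Prod>j\<in>{0..<L}. \<Sum>v\<in>{0..<V}. g j v)"
    unfolding seqs_def by (rule prod_sum_PiE[symmetric]) auto
  also have "\<dots> = (\<Prod>j\<in>{0..<L}. if j = i then (1 - \<kappa> t) * (if x0 i \<noteq> x1 i then 1 else 0) else 1)"
  proof (rule prod.cong)
    fix j assume j: "j \<in> {0..<L}"
    show "(\<Sum>v\<in>{0..<V}. g j v) = (if j = i then (1 - \<kappa> t) * (if x0 i \<noteq> x1 i then 1 else 0) else 1)"
      using seqs_lt[OF x0, of j] seqs_lt[OF x1, of j] j
      by (cases "j = i") (auto simp: g_def f_def sum_delta_ne sum_delta_lin simp del: One_nat_def)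
  qed simp
  also have "\<dots> = (1 - \<kappa> t) * (if x0 i \<noteq> x1 i then 1 else 0)" using i by (simp add: prod.delta)
  finally show ?thesis .
qed

lemma cp_nonneg: "0 \<le> \<kappa> t \<Longrightarrow> \<kappa> t \<le> 1 \<Longrightarrow> 0 \<le> cond_path L \<kappa> t z x0 x1"
  unfolding cond_path_def by (intro prod_nonneg) (auto simp: delta_def)

lemma marg_post:
  assumes k: "0 \<le> \<kappa> t" "\<kappa> t \<le> 1" and pi: "\<forall>x0\<in>seqs V L. \<forall>x1\<in>seqs V L. \<pi> x0 x1 \<ge> 0"
    and x0: "x0 \<in> seqs V L" and x1: "x1 \<in> seqs V L"
  shows "marg_path V L \<pi> \<kappa> t z * posterior V L \<pi> \<kappa> t x0 x1 z = cond_path L \<kappa> t z x0 x1 * \<pi> x0 x1"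
proof (cases "marg_path V L \<pi> \<kappa> t z = 0")
  case True
  have nn: "\<And>a b. a \<in> seqs V L \<Longrightarrow> b \<in> seqs V L \<Longrightarrow> 0 \<le> \<pi> a b * cond_path L \<kappa> t z a b"
    using pi cp_nonneg[where \<kappa>=\<kappa> and t=t, OF k] by (simp add: mult_nonneg_nonneg)
  have inn: "\<forall>a\<in>seqs V L. 0 \<le> (\<Sum>b\<in>seqs V L. \<pi> a b * cond_path L \<kappa> t z a b)"
    using nn by (auto intro: sum_nonneg)
  have "\<forall>a\<in>seqs V L. (\<Sum>b\<in>seqs V L. \<pi> a b * cond_path L \<kappa> t z a b) = 0"
    using True inn sum_nonneg_eq_0_iff[of "seqs V L" "\<lambda>a. \<Sum>b\<in>seqs V L. \<pi> a b * cond_path L \<kappa> t z a b"]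
    unfolding marg_path_def by simp
  hence "(\<Sum>b\<in>seqs V L. \<pi> x0 b * cond_path L \<kappa> t z x0 b) = 0" using x0 by blast
  hence "\<pi> x0 x1 * cond_path L \<kappa> t z x0 x1 = 0"
    using x0 x1 nn sum_nonneg_eq_0_iff[of "seqs V L" "\<lambda>b. \<pi> x0 b * cond_path L \<kappa> t z x0 b"] by simp
  thus ?thesis using True by (simp add: mult.commute)
next
  case False
  thus ?thesis by (simp add: posterior_def)
qed

lemma vel_eq:
  assumes "a \<noteq> z i"
  shows "velocity V L \<pi> \<kappa> \<kappa>' t i a z = \<kappa>' t / (1 - \<kappa> t) *
     (\<Sum>x0\<in>seqs V L. \<Sum>x1\<in>seqs V L. delta (x1 i) a * posterior V L \<pi> \<kappa> t x0 x1 z)"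
  using assms unfolding velocity_def by (simp add: delta_def sum_distrib_left mult.assoc)

lemma swap4: "(\<Sum>i\<in>I. \<Sum>a\<in>A i. \<Sum>x\<in>X. \<Sum>y\<in>Y. (G i a x y::real)) = (\<Sum>x\<in>X. \<Sum>y\<in>Y. \<Sum>i\<in>I. \<Sum>a\<in>A i. G i a x y)"
proof -
  have "(\<Sum>i\<in>I. \<Sum>a\<in>A i. \<Sum>x\<in>X. \<Sum>y\<in>Y. G i a x y) = (\<Sum>i\<in>I. \<Sum>x\<in>X. \<Sum>y\<in>Y. \<Sum>a\<in>A i. G i a x y)"
  proof (intro sum.cong refl)
    fix i
    have "(\<Sum>a\<in>A i. \<Sum>x\<in>X. \<Sum>y\<in>Y. G i a x y) = (\<Sum>x\<in>X. \<Sum>a\<in>A i. \<Sum>y\<in>Y. G i a x y)" by (rule sum.swap)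
    also have "\<dots> = (\<Sum>x\<in>X. \<Sum>y\<in>Y. \<Sum>a\<in>A i. G i a x y)" by (intro sum.cong refl sum.swap)
    finally show "(\<Sum>a\<in>A i. \<Sum>x\<in>X. \<Sum>y\<in>Y. G i a x y) = (\<Sum>x\<in>X. \<Sum>y\<in>Y. \<Sum>a\<in>A i. G i a x y)" .
  qed
  also have "\<dots> = (\<Sum>x\<in>X. \<Sum>i\<in>I. \<Sum>y\<in>Y. \<Sum>a\<in>A i. G i a x y)" by (rule sum.swap)
  also have "\<dots> = (\<Sum>x\<in>X. \<Sum>y\<in>Y. \<Sum>i\<in>I. \<Sum>a\<in>A i. G i a x y)" by (intro sum.cong refl sum.swap)
  finally show ?thesis .
qed

lemma swap_out: "(\<Sum>z\<in>Z. \<Sum>x\<in>X. \<Sum>y\<in>Y. \<Sum>i\<in>I. (G z x y i::real)) = (\<Sum>x\<in>X. \<Sum>y\<in>Y. \<Sum>i\<in>I. \<Sum>z\<in>Z. G z x y i)"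
proof -
  have "(\<Sum>z\<in>Z. \<Sum>x\<in>X. \<Sum>y\<in>Y. \<Sum>i\<in>I. G z x y i) = (\<Sum>x\<in>X. \<Sum>z\<in>Z. \<Sum>y\<in>Y. \<Sum>i\<in>I. G z x y i)" by (rule sum.swap)
  also have "\<dots> = (\<Sum>x\<in>X. \<Sum>y\<in>Y. \<Sum>z\<in>Z. \<Sum>i\<in>I. G z x y i)" by (intro sum.cong refl sum.swap)
  also have "\<dots> = (\<Sum>x\<in>X. \<Sum>y\<in>Y. \<Sum>i\<in>I. \<Sum>z\<in>Z. G z x y i)" by (intro sum.cong refl sum.swap)
  finally show ?thesis .
qed

lemma lemA:
  assumes k: "0 \<le> \<kappa> t" "\<kappa> t < 1" and pi: "\<forall>x0\<in>seqs V L. \<forall>x1\<in>seqs V L. \<pi> x0 x1 \<ge> 0"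
  shows "(\<Sum>xt\<in>seqs V L. marg_path V L \<pi> \<kappa> t xt *
               (\<Sum>i\<in>{0..<L}. \<Sum>a\<in>{0..<V} - {xt i}. velocity V L \<pi> \<kappa> \<kappa>' t i a xt))
     = \<kappa>' t * (\<Sum>x0\<in>seqs V L. \<Sum>x1\<in>seqs V L. real (hamming L x0 x1) * \<pi> x0 x1)"
proof -
  define S where "S = seqs V L"
  define c where "c = \<kappa>' t / (1 - \<kappa> t)"
  have step1: "marg_path V L \<pi> \<kappa> t xt *
               (\<Sum>i\<in>{0..<L}. \<Sum>a\<in>{0..<V} - {xt i}. velocity V L \<pi> \<kappa> \<kappa>' t i a xt)
     = c * (\<Sum>x0\<in>S. \<Sum>x1\<in>S. \<pi> x0 x1 * (\<Sum>i\<in>{0..<L}. cond_path L \<kappa> t xt x0 x1 * (if x1 i \<noteq> xt i then 1 else 0)))"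
    if xt: "xt \<in> S" for xt
  proof -
    have "marg_path V L \<pi> \<kappa> t xt *
               (\<Sum>i\<in>{0..<L}. \<Sum>a\<in>{0..<V} - {xt i}. velocity V L \<pi> \<kappa> \<kappa>' t i a xt)
       = (\<Sum>i\<in>{0..<L}. \<Sum>a\<in>{0..<V} - {xt i}. c * (\<Sum>x0\<in>S. \<Sum>x1\<in>S. delta (x1 i) a * (cond_path L \<kappa> t xt x0 x1 * \<pi> x0 x1)))"
      unfolding sum_distrib_left
      apply (intro sum.cong refl)
      apply (subst vel_eq, simp)
      apply (simp add: sum_distrib_left c_def S_def)
      apply (intro sum.cong refl)
      apply (subst marg_post[where \<kappa>=\<kappa> and t=t and \<pi>=\<pi>, OF k(1) _ pi, symmetric], use k in auto)
      done
    also have "\<dots> = c * (\<Sum>x0\<in>S. \<Sum>x1\<in>S. \<pi> x0 x1 * (\<Sum>i\<in>{0..<L}. cond_path L \<kappa> t xt x0 x1 *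
          (\<Sum>a\<in>{0..<V} - {xt i}. delta (x1 i) a)))"
      unfolding sum_distrib_left sum_distrib_right
      by (subst swap4) (auto intro!: sum.cong simp: algebra_simps)
    also have "\<dots> = c * (\<Sum>x0\<in>S. \<Sum>x1\<in>S. \<pi> x0 x1 * (\<Sum>i\<in>{0..<L}. cond_path L \<kappa> t xt x0 x1 * (if x1 i \<noteq> xt i then 1 else 0)))"
    proof -
      have "(\<Sum>a\<in>{0..<V} - {xt i}. delta (x1 i) a) = (if x1 i \<noteq> xt i then 1 else 0)"
        if "x1 \<in> S" "i < L" for x1 i
        using seqs_lt[OF that[unfolded S_def]] by (auto simp: delta_def)
      thus ?thesis by (auto intro!: sum.cong arg_cong2[where f="(*)"])
    qed
    finally show ?thesis .
  qed
  have "(\<Sum>xt\<in>seqs V L. marg_path V L \<pi> \<kappa> t xt *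
               (\<Sum>i\<in>{0..<L}. \<Sum>a\<in>{0..<V} - {xt i}. velocity V L \<pi> \<kappa> \<kappa>' t i a xt))
     = c * (\<Sum>x0\<in>S. \<Sum>x1\<in>S. \<pi> x0 x1 * (\<Sum>i\<in>{0..<L}. \<Sum>xt\<in>S. cond_path L \<kappa> t xt x0 x1 * (if x1 i \<noteq> xt i then 1 else 0)))"
  proof -
    have "(\<Sum>xt\<in>seqs V L. marg_path V L \<pi> \<kappa> t xt *
               (\<Sum>i\<in>{0..<L}. \<Sum>a\<in>{0..<V} - {xt i}. velocity V L \<pi> \<kappa> \<kappa>' t i a xt))
      = (\<Sum>xt\<in>S. c * (\<Sum>x0\<in>S. \<Sum>x1\<in>S. \<pi> x0 x1 * (\<Sum>i\<in>{0..<L}. cond_path L \<kappa> t xt x0 x1 * (if x1 i \<noteq> xt i then 1 else 0))))"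
      unfolding S_def by (rule sum.cong) (auto simp: step1[unfolded S_def])
    also have "\<dots> = c * (\<Sum>xt\<in>S. \<Sum>x0\<in>S. \<Sum>x1\<in>S. \<Sum>i\<in>{0..<L}. \<pi> x0 x1 * (cond_path L \<kappa> t xt x0 x1 * (if x1 i \<noteq> xt i then 1 else 0)))"
      by (simp add: sum_distrib_left)
    also have "\<dots> = c * (\<Sum>x0\<in>S. \<Sum>x1\<in>S. \<Sum>i\<in>{0..<L}. \<Sum>xt\<in>S. \<pi> x0 x1 * (cond_path L \<kappa> t xt x0 x1 * (if x1 i \<noteq> xt i then 1 else 0)))"
      by (subst swap_out) (rule refl)
    also have "\<dots> = c * (\<Sum>x0\<in>S. \<Sum>x1\<in>S. \<pi> x0 x1 * (\<Sum>i\<in>{0..<L}. \<Sum>xt\<in>S. cond_path L \<kappa> t xt x0 x1 * (if x1 i \<noteq> xt i then 1 else 0)))"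
      by (simp add: sum_distrib_left)
    finally show ?thesis .
  qed
  also have "\<dots> = c * (\<Sum>x0\<in>S. \<Sum>x1\<in>S. \<pi> x0 x1 * ((1 - \<kappa> t) * real (hamming L x0 x1)))"
  proof -
    have "(\<Sum>i\<in>{0..<L}. \<Sum>xt\<in>S. cond_path L \<kappa> t xt x0 x1 * (if x1 i \<noteq> xt i then 1 else 0))
       = (1 - \<kappa> t) * real (hamming L x0 x1)" if "x0 \<in> S" "x1 \<in> S" for x0 x1
    proof -
      have "(\<Sum>i\<in>{0..<L}. \<Sum>xt\<in>S. cond_path L \<kappa> t xt x0 x1 * (if x1 i \<noteq> xt i then 1 else 0))
         = (\<Sum>i\<in>{0..<L}. (1 - \<kappa> t) * (if x0 i \<noteq> x1 i then 1 else 0))"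
        using lemB that unfolding S_def by (intro sum.cong) auto
      also have "\<dots> = (1 - \<kappa> t) * real (hamming L x0 x1)"
        by (simp add: hamming_def sum_distrib_left[symmetric] sum.inter_filter[symmetric])
      finally show ?thesis .
    qed
    thus ?thesis by (auto intro!: sum.cong arg_cong2[where f="(*)"])
  qed
  also have "\<dots> = \<kappa>' t * (\<Sum>x0\<in>seqs V L. \<Sum>x1\<in>seqs V L. real (hamming L x0 x1) * \<pi> x0 x1)"
    using k unfolding c_def S_def sum_distrib_left by (intro sum.cong refl) (simp add: field_simps)
  finally show ?thesis .
qed

theorem corollary1:
  fixes V L :: nat
    and \<pi> :: "(nat \<Rightarrow> nat) \<Rightarrow> (nat \<Rightarrow> nat) \<Rightarrow> real"
    and \<kappa> \<kappa>' :: "real \<Rightarrow> real"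
  assumes "V \<ge> 1" and "L \<ge> 1"
    and "\<forall>x0\<in>seqs V L. \<forall>x1\<in>seqs V L. \<pi> x0 x1 \<ge> 0"
    and "(\<Sum>x0\<in>seqs V L. \<Sum>x1\<in>seqs V L. \<pi> x0 x1) = 1"
    and "\<forall>t\<in>{0..1}. (\<kappa> has_real_derivative \<kappa>' t) (at t within {0..1})"
    and "\<forall>t\<in>{0..1}. 0 \<le> \<kappa> t \<and> \<kappa> t \<le> 1"
    and "\<kappa> 0 = 0" and "\<kappa> 1 = 1"
    and "\<forall>t\<in>{0..<1}. \<kappa> t < 1"
  shows "(\<forall>x0\<in>seqs V L. \<forall>x1\<in>seqs V L.
            (\<Sum>i\<in>{0..<L}. simil (x0 i) (x1 i)) = real (hamming L x0 x1))
       \<and> ((\<lambda>t. \<Sum>xt\<in>seqs V L. marg_path V L \<pi> \<kappa> t xt *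
               (\<Sum>i\<in>{0..<L}. \<Sum>a\<in>{0..<V} - {xt i}. velocity V L \<pi> \<kappa> \<kappa>' t i a xt))
          has_integral
          (\<Sum>x0\<in>seqs V L. \<Sum>x1\<in>seqs V L. real (hamming L x0 x1) * \<pi> x0 x1)) {0..1}"
proof -
  note a = assms
  define C where "C = (\<Sum>x0\<in>seqs V L. \<Sum>x1\<in>seqs V L. real (hamming L x0 x1) * \<pi> x0 x1)"
  have P1: "\<forall>x0\<in>seqs V L. \<forall>x1\<in>seqs V L.
            (\<Sum>i\<in>{0..<L}. simil (x0 i) (x1 i)) = real (hamming L x0 x1)"
  proof (intro ballI)
    fix x0 x1 :: "nat \<Rightarrow> nat"
    have "(\<Sum>i\<in>{0..<L}. simil (x0 i) (x1 i)) = (\<Sum>i\<in>{0..<L}. if x0 i \<noteq> x1 i then 1 else 0)"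
      by (intro sum.cong) (auto simp: simil_def delta_def)
    also have "\<dots> = real (hamming L x0 x1)"
      by (simp add: hamming_def sum.inter_filter[symmetric])
    finally show "(\<Sum>i\<in>{0..<L}. simil (x0 i) (x1 i)) = real (hamming L x0 x1)" .
  qed
  have "((\<lambda>t. \<kappa>' t) has_integral (\<kappa> 1 - \<kappa> 0)) {0..1}"
  proof (rule fundamental_theorem_of_calculus)
    fix x :: real assume "x \<in> {0..1}"
    thus "(\<kappa> has_vector_derivative \<kappa>' x) (at x within {0..1})"
      using a(5) unfolding has_real_derivative_iff_has_vector_derivative by blast
  qed simp
  hence "((\<lambda>t. \<kappa>' t) has_integral 1) {0..1}" using a(7,8) by simp
  from has_integral_mult_left[OF this, of C]
  have "((\<lambda>t. \<kappa>' t * C) has_integral C) {0..1}" by simp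
  hence "((\<lambda>t. \<Sum>xt\<in>seqs V L. marg_path V L \<pi> \<kappa> t xt *
               (\<Sum>i\<in>{0..<L}. \<Sum>a\<in>{0..<V} - {xt i}. velocity V L \<pi> \<kappa> \<kappa>' t i a xt))
          has_integral C) {0..1}"
  proof (rule has_integral_spike[OF negligible_sing[of 1], rotated])
    fix t :: real assume t: "t \<in> {0..1} - {1}"
    hence "0 \<le> \<kappa> t" "\<kappa> t < 1" using a(6,9) by auto
    thus "(\<Sum>xt\<in>seqs V L. marg_path V L \<pi> \<kappa> t xt *
               (\<Sum>i\<in>{0..<L}. \<Sum>a\<in>{0..<V} - {xt i}. velocity V L \<pi> \<kappa> \<kappa>' t i a xt)) = \<kappa>' t * C"
      unfolding C_def by (rule lemA[OF _ _ a(3)])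
  qed
  thus ?thesis using P1 unfolding C_def by blast
qed

end
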